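(* In $\mathfrak A_n$, for $i=1,\dots,n-1$, with $F_i=\tau_i(\pi_i^2-\pi_{i+1}^2)+(\pi_{i+1}-\pi_i)$, the following hold: $\tau_i\pi_i+\pi_{i+1}\tau_i=1$; $(\pi_i-\pi_{i+1})\tau_i=\tau_i(\pi_i-\pi_{i+1})$; $(\pi_i^2-\pi_{i+1}^2)\tau_i+\tau_i(\pi_i^2-\pi_{i+1}^2)=2(\pi_i-\pi_{i+1})$; $F_i\pi_i+\pi_{i+1}F_i=0$; $F_i\pi_{i+1}+\pi_iF_i=0$; and $F_i^2=\pi_i^2+\pi_{i+1}^2-(\pi_i^2-\pi_{i+1}^2)^2$.
   Context: $\mathfrak A_n$ is the $\mathbb C$-algebra generated by $\tau_1,\dots,\tau_{n-1}$ with relations $\tau_k^2=1$, $(\tau_k\tau_{k+1})^3=1$, $(\tau_k\tau_l)^2=-1$ for $|k-l|>1$. Set $\tau_{i,i+1}=\tau_i$, $\tau_{ij}=-\tau_{i,j-1}\tau_{j-1}\tau_{i,j-1}$ for $i<j-1$, $\tau_{ji}=-\tau_{ij}$, and $\pi_k=\tau_{1k}+\dots+\tau_{k-1,k}$ ($\pi_1=0$). *)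

theory Defs
  imports Complex_Main
begin

class complex_algebra_1 = ring_1 +
  fixes scaleC :: "complex \<Rightarrow> 'a \<Rightarrow> 'a"
  assumes scaleC_add_right: "scaleC a (x + y) = scaleC a x + scaleC a y"
    and scaleC_add_left: "scaleC (a + b) x = scaleC a x + scaleC b x"
    and scaleC_scaleC: "scaleC a (scaleC b x) = scaleC (a * b) x"
    and scaleC_one: "scaleC 1 x = x"
    and mult_scaleC_left: "scaleC a x * y = scaleC a (x * y)"
    and mult_scaleC_right: "x * scaleC a y = scaleC a (x * y)"

definition A_rels :: "nat \<Rightarrow> (nat \<Rightarrow> 'a::ring_1) \<Rightarrow> bool" where
  "A_rels n tau \<longleftrightarrow>
     (\<forall>k. 1 \<le> k \<and> k \<le> n - 1 \<longrightarrow> tau k * tau k = 1) \<and>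
     (\<forall>k. 1 \<le> k \<and> k + 1 \<le> n - 1 \<longrightarrow> (tau k * tau (k+1)) ^ 3 = 1) \<and>
     (\<forall>k l. 1 \<le> k \<and> k \<le> n - 1 \<and> 1 \<le> l \<and> l \<le> n - 1 \<and> (k + 1 < l \<or> l + 1 < k)
            \<longrightarrow> (tau k * tau l) ^ 2 = - 1)"

text \<open>tau_up tau i j = tau_{ij} for i < j: tau_{i,i+1} = tau_i and
  tau_{ij} = - tau_{i,j-1} tau_{j-1} tau_{i,j-1} for i < j - 1.\<close>
fun tau_up :: "(nat \<Rightarrow> 'a::ring_1) \<Rightarrow> nat \<Rightarrow> nat \<Rightarrow> 'a" where
  "tau_up tau i 0 = 0"
| "tau_up tau i (Suc j) =
     (if Suc j \<le> i then 0
      else if j = i then tau i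
      else - (tau_up tau i j * tau j * tau_up tau i j))"

definition tauij :: "(nat \<Rightarrow> 'a::ring_1) \<Rightarrow> nat \<Rightarrow> nat \<Rightarrow> 'a" where
  "tauij tau i j = (if i < j then tau_up tau i j else if j < i then - tau_up tau j i else 0)"

definition piA :: "(nat \<Rightarrow> 'a::ring_1) \<Rightarrow> nat \<Rightarrow> 'a" where
  "piA tau k = (\<Sum>i=1..<k. tauij tau i k)"

end

theory Submission
  imports Defs
begin


lemma alg:
  fixes a b t :: "'a::ring_1"
  assumes tt: "t*t = 1" and bdef: "b = t - t*a*t" and ab: "a*b = -(b*a)"
  shows "t*a + b*t = 1 \<and> (a - b)*t = t*(a-b) \<and>
     (a^2 - b^2)*t + t*(a^2-b^2) = 2*(a-b) \<and>
     (t*(a^2-b^2) + (b-a))*a + b*(t*(a^2-b^2) + (b-a)) = 0 \<and>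
     (t*(a^2-b^2) + (b-a))*b + a*(t*(a^2-b^2) + (b-a)) = 0 \<and>
     (t*(a^2-b^2) + (b-a))^2 = a^2 + b^2 - (a^2-b^2)^2"
proof -
  have tt': "t*(t*x) = x" for x by (metis mult.assoc mult_1_left tt)
  have bt: "b*t = 1 - t*a" by (simp add: bdef algebra_simps tt tt')
  have tb: "t*b = 1 - a*t" by (simp add: bdef algebra_simps tt tt')
  have e1: "t*a + b*t = 1" using bt by simp
  have e2: "a*t + t*b = 1" using tb by simp
  have at: "a*t = 1 - t*b" using tb by simp
  have ta: "t*a = 1 - b*t" using bt by simp
  have e3: "(a - b)*t = t*(a-b)" using bt tb by (simp add: algebra_simps)
  have ab2: "a*(b*b) = b*(b*a)"
  proof -
    have "a*(b*b) = (a*b)*b" by (simp add: mult.assoc)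
    also have "\<dots> = -(b*(a*b))" by (simp add: ab mult.assoc)
    also have "\<dots> = b*(b*a)" by (simp add: ab)
    finally show ?thesis .
  qed
  have a2b: "a*(a*b) = b*(a*a)"
  proof -
    have "a*(a*b) = -(a*(b*a))" by (simp add: ab)
    also have "\<dots> = -((a*b)*a)" by (simp add: mult.assoc)
    also have "\<dots> = b*(a*a)" by (simp add: ab mult.assoc)
    finally show ?thesis .
  qed
  have a2t: "a*(a*t) = a - b + t*(b*b)"
  proof -
    have "a*(a*t) = a*(1 - t*b)" by (simp only: at)
    also have "\<dots> = a - (a*t)*b" by (simp add: algebra_simps)
    also have "\<dots> = a - (1 - t*b)*b" by (simp only: at)
    finally show ?thesis by (simp add: algebra_simps)
  qed
  have ta2: "t*(a*a) = a - b + b*(b*t)"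
  proof -
    have "t*(a*a) = (1 - b*t)*a" by (simp only: ta flip: mult.assoc)
    also have "\<dots> = a - b*(t*a)" by (simp add: algebra_simps)
    also have "\<dots> = a - b*(1 - b*t)" by (simp only: ta)
    finally show ?thesis by (simp add: algebra_simps)
  qed
  have e4: "(a^2 - b^2)*t + t*(a^2-b^2) = 2*(a-b)"
  proof -
    have "(a^2 - b^2)*t + t*(a^2-b^2) = a*(a*t) + t*(a*a) - b*(b*t) - t*(b*b)"
      by (simp add: power2_eq_square algebra_simps)
    also have "\<dots> = 2*(a-b)" by (simp only: a2t ta2) (simp add: algebra_simps mult_2)
    finally show ?thesis .
  qed
  have e5: "(t*(a^2-b^2) + (b-a))*a + b*(t*(a^2-b^2) + (b-a)) = 0"
  proof -
    have h: "b*(t*x) = x - t*(a*x)" for x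
      by (metis bt mult.assoc mult_1_left left_diff_distrib)
    show ?thesis unfolding power2_eq_square
      by (simp add: h algebra_simps ab2)
  qed
  have e6: "(t*(a^2-b^2) + (b-a))*b + a*(t*(a^2-b^2) + (b-a)) = 0"
  proof -
    have h: "a*(t*x) = x - t*(b*x)" for x
      by (metis at mult.assoc mult_1_left left_diff_distrib)
    show ?thesis unfolding power2_eq_square
      by (simp add: h algebra_simps a2b)
  qed
  have e7: "(t*(a^2-b^2) + (b-a))^2 = a^2 + b^2 - (a^2-b^2)^2"
  proof -
    define c where "c = a^2 - b^2"
    define d where "d = b - a"
    have tc: "t*c = 2*(a-b) - c*t" using e4 unfolding c_def by (simp add: algebra_simps)
    have dt: "d*t = t*d" using e3 unfolding d_def by (simp add: algebra_simps)
    have cd: "c*d = d*c" unfolding c_def d_def power2_eq_square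
      using ab2 a2b by (simp add: algebra_simps)
    have abz: "a*b + b*a = 0" using ab by simp
    have "(t*c + d)^2 = t*(c*(t*c)) + t*(c*d) + d*(t*c) + d*d"
      by (simp add: power2_eq_square algebra_simps)
    also have "t*(c*(t*c)) = -2*(d*(t*c)) - c*c"
    proof -
      have "t*(c*(t*c)) = (t*c)*(t*c)" by (simp add: mult.assoc)
      also have "\<dots> = (2*(a-b) - c*t)*(t*c)" using tc by simp
      also have "\<dots> = 2*((a-b)*(t*c)) - c*(t*(t*c))" by (simp add: algebra_simps)
      also have "\<dots> = -2*(d*(t*c)) - c*c" by (simp add: tt' d_def algebra_simps)
      finally show ?thesis .
    qed
    also have "d*(t*c) = t*(d*c)" using dt by (metis mult.assoc)
    also have "t*(c*d) = t*(d*c)" using cd by simp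
    finally have X: "(t*c + d)^2 = -2*(t*(d*c)) - c*c + t*(d*c) + t*(d*c) + d*d" .
    have "(t*c + d)^2 = d*d - c*c" unfolding X by (simp add: algebra_simps mult_2)
    also have "d*d = a*a + b*b" using abz unfolding d_def by (simp add: algebra_simps)
    finally show ?thesis unfolding c_def d_def by (simp add: power2_eq_square)
  qed
  show ?thesis using e1 e3 e4 e5 e6 e7 by blast
qed

lemma anti_gen: fixes x y :: "'a::ring_1"
  assumes xx: "x*x=1" and yy: "y*y=1" and h: "(x*y)^2 = -1" shows "x*y = -(y*x)"
proof -
  have yy': "y*(y*z) = z" for z by (metis mult.assoc mult_1_left yy)
  have xx': "x*(x*z) = z" for z by (metis mult.assoc mult_1_left xx)
  have "x*y = (x*y) * (x*y) * (y*x)"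
    by (simp add: mult.assoc yy' xx' xx yy)
  also have "\<dots> = - (y*x)" using h by (simp add: power2_eq_square)
  finally show ?thesis .
qed
lemma braid_gen: fixes x y :: "'a::ring_1"
  assumes xx: "x*x=1" and yy: "y*y=1" and h: "(x*y)^3 = 1" shows "x*y*x = y*x*y"
proof -
  have yy': "y*(y*z) = z" for z by (metis mult.assoc mult_1_left yy)
  have xx': "x*(x*z) = z" for z by (metis mult.assoc mult_1_left xx)
  have "x*y*x = (x*y)*(x*y)*(x*y) * (y*x*y)"
    by (simp add: mult.assoc yy' xx' xx yy)
  also have "\<dots> = y*x*y" using h by (simp add: power3_eq_cube)
  finally show ?thesis .
qed

lemma braidU_gen: fixes x y V :: "'a::ring_1"
  assumes VV: "V*V=1" and xV: "x*V = -(V*x)" and b: "x*y*x = y*x*y"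
  shows "x*(-(V*y*V))*x = (-(V*y*V))*x*(-(V*y*V))"
proof -
  have VV': "V*(V*z) = z" for z by (simp add: VV flip: mult.assoc)
  have xV': "x*(V*z) = -(V*(x*z))" for z by (simp add: xV flip: mult.assoc)
  have b': "x*(y*(x*z)) = y*(x*(y*z))" for z by (simp add: b flip: mult.assoc)
  have VxV0: "V*x*V = -x" by (simp add: mult.assoc xV VV')
  have VxV: "V*(x*(V*z)) = -(x*z)" for z by (simp add: xV' VV')
  have Vx: "V*x = -(x*V)" using xV by simp
  have "x*(-(V*y*V))*x = -((x*V)*y*(V*x))" by (simp add: mult.assoc)
  also have "\<dots> = -((-(V*x))*y*(V*x))" by (simp only: xV)
  also have "\<dots> = -((V*x)*y*(x*V))" by (simp add: Vx)
  also have "\<dots> = -(V*(x*y*x)*V)" by (simp add: mult.assoc)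
  also have "\<dots> = -(V*y*(x*y*V))" by (simp add: b' mult.assoc)
  also have "\<dots> = V*y*(V*x*V)*y*V" by (simp add: VxV mult.assoc)
  also have "\<dots> = (-(V*y*V))*x*(-(V*y*V))" by (simp add: mult.assoc)
  finally show ?thesis .
qed
lemma Q_gen: fixes s t p :: "'a::ring_1"
  assumes ss: "s*s=1" and tt: "t*t=1" and b: "s*t*s = t*s*t" and tp: "t*p = -(p*t)"
  shows "s*(t - t*(s - s*p*s)*t) = -((t - t*(s - s*p*s)*t)*s)"
proof -
  have ss': "s*(s*z) = z" for z by (simp add: ss flip: mult.assoc)
  have tt': "t*(t*z) = z" for z by (simp add: tt flip: mult.assoc)
  have b': "s*(t*(s*z)) = t*(s*(t*z))" for z by (simp add: b flip: mult.assoc)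
  have tp': "t*(p*z) = -(p*(t*z))" for z by (simp add: tp flip: mult.assoc)
  have b2: "s*(t*s) = t*(s*t)" using b by (simp add: mult.assoc)
  have e1: "s*(t*(s*t)) = t*s" by (simp add: b' tt' tt)
  have e2: "t*(s*(t*s)) = s*t" by (simp add: b2 tt')
  have e3: "t*(s*(p*(s*(t*s)))) = -(t*(s*(t*(p*(s*t)))))" 
    by (simp add: b2 tp')
  have "s*(t - t*(s - s*p*s)*t) = s*t - s*(t*(s*t)) + s*(t*(s*(p*(s*t))))"
    by (simp add: algebra_simps)
  also have "\<dots> = s*t - t*s + t*(s*(t*(p*(s*t))))" by (simp add: e1 b' tt)
  also have "\<dots> = -((t - t*(s - s*p*s)*t)*s)"
    by (simp add: algebra_simps e2 e3)
  finally show ?thesis .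
qed


lemma sq: "A_rels n tau \<Longrightarrow> 1\<le>k \<Longrightarrow> k \<le> n-1 \<Longrightarrow> tau k * tau k = 1"
  unfolding A_rels_def by blast

lemma anti: assumes "A_rels n tau" "1\<le>k" "k\<le>n-1" "1\<le>l" "l\<le>n-1" "k+1<l \<or> l+1<k"
  shows "tau k * tau l = - (tau l * tau k)"
proof -
  have h: "(tau k * tau l)^2 = -1" using assms unfolding A_rels_def by blast
  show ?thesis by (rule anti_gen[OF sq[OF assms(1-3)] sq[OF assms(1,4,5)] h])
qed

lemma braid: assumes "A_rels n tau" "1\<le>k" "k+1 \<le> n-1"
  shows "tau k * tau (k+1) * tau k = tau (k+1) * tau k * tau (k+1)"
proof -
  have h: "(tau k * tau (k+1))^3 = 1" using assms unfolding A_rels_def by auto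
  show ?thesis by (rule braid_gen[OF sq[of n tau k] sq[of n tau "k+1"] h]) (use assms in auto)
qed

lemma anti3: fixes x u v :: "'a::ring_1"
  assumes "x*u = -(u*x)" "x*v = -(v*x)" shows "x*(u*v*u) = -((u*v*u)*x)"
proof -
  have "x*(u*v*u) = (x*u)*v*u" by (simp add: mult.assoc)
  also have "\<dots> = -(u*((x*v)*u))" using assms(1) by (simp add: mult.assoc)
  also have "\<dots> = u*(v*(x*u))" using assms(2) by (simp add: mult.assoc)
  also have "\<dots> = -((u*v*u)*x)" using assms(1) by (simp add: mult.assoc)
  finally show ?thesis .
qed

lemma anti_rec: fixes x u v :: "'a::ring_1"
  assumes "x*u = -(u*x)" "x*v = -(v*x)" shows "x*(u - u*v*u) = -((u - u*v*u)*x)"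
  using anti3[OF assms] assms(1) by (simp add: algebra_simps)

lemma U_props: assumes "A_rels n tau" "1 \<le> j" "j < m" "m \<le> n"
  shows "tau_up tau j m * tau_up tau j m = 1 \<and>
    (\<forall>l. 1\<le>l \<and> l\<le>n-1 \<and> (m+1 \<le> l \<or> l+1 < j) \<longrightarrow> tau l * tau_up tau j m = -(tau_up tau j m * tau l))"
  using assms(3,4)
proof (induction m)
  case 0 then show ?case by simp
next
  case (Suc m)
  show ?case
  proof (cases "m = j")
    case True
    then show ?thesis using Suc.prems assms(1,2)
      by (auto intro: sq anti)
  next
    case False
    then have mj: "j < m" using Suc.prems by simp
    have IH: "tau_up tau j m * tau_up tau j m = 1"
      "\<And>l. 1\<le>l \<Longrightarrow> l\<le>n-1 \<Longrightarrow> (m+1 \<le> l \<or> l+1 < j) \<Longrightarrow> tau l * tau_up tau j m = -(tau_up tau j m * tau l)"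
      using Suc.IH[OF mj] Suc.prems by auto
    define U where "U = tau_up tau j m"
    have eq: "tau_up tau j (Suc m) = -(U * tau m * U)" using mj by (simp add: U_def)
    have mm: "tau m * tau m = 1" using sq[OF assms(1)] mj Suc.prems assms(2) by auto
    have UU: "U*U = 1" using IH(1) by (simp add: U_def)
    have UU': "U*(U*z) = z" for z by (simp add: UU flip: mult.assoc)
    have P1: "tau_up tau j (Suc m) * tau_up tau j (Suc m) = 1"
      unfolding eq by (simp add: mult.assoc UU' mm UU flip: mult.assoc[of "tau m" "tau m"])
    have P2: "tau l * tau_up tau j (Suc m) = -(tau_up tau j (Suc m) * tau l)"
      if l: "1\<le>l" "l\<le>n-1" "Suc m+1 \<le> l \<or> l+1 < j" for l
    proof -
      have a1: "tau l * U = -(U * tau l)" using IH(2)[of l] l unfolding U_def by auto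
      have a2: "tau l * tau m = -(tau m * tau l)"
        by (rule anti[OF assms(1)]) (use l mj Suc.prems assms(2) in auto)
      show ?thesis unfolding eq using anti3[OF a1 a2] by simp
    qed
    show ?thesis using P1 P2 by blast
  qed
qed

lemma braid_U: assumes "A_rels n tau" "1 \<le> j" "j < m" "m \<le> n-1"
  shows "tau m * tau_up tau j m * tau m = tau_up tau j m * tau m * tau_up tau j m"
proof (cases "m = Suc j")
  case True
  then show ?thesis using braid[OF assms(1,2)] assms by simp
next
  case False
  then obtain m' where m: "m = Suc m'" "j < m'" using assms(3) by (cases m) auto
  define V where "V = tau_up tau j m'"
  have eq: "tau_up tau j m = -(V * tau m' * V)" using m by (simp add: V_def)
  have UP: "V*V = 1" "tau m * V = -(V * tau m)"
    using U_props[OF assms(1,2) m(2), of] m assms unfolding V_def by auto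
  have b: "tau m * tau m' * tau m = tau m' * tau m * tau m'"
    using braid[OF assms(1), of m'] m assms by simp
  show ?thesis unfolding eq by (rule braidU_gen[OF UP b])
qed

lemma pi0: "piA tau 0 = 0" "piA tau 1 = 0" "piA tau (Suc 0) = 0" by (simp_all add: piA_def)

lemma pi_rec: assumes "A_rels n tau" "1 \<le> m" "m \<le> n-1"
  shows "piA tau (Suc m) = tau m - tau m * piA tau m * tau m"
proof -
  have set: "{1..<Suc m} = insert m {1..<m}" using assms(2) by auto
  have "piA tau (Suc m) = tauij tau m (Suc m) + (\<Sum>j=1..<m. tauij tau j (Suc m))"
    unfolding piA_def set by simp
  also have "tauij tau m (Suc m) = tau m" by (simp add: tauij_def)
  also have "(\<Sum>j=1..<m. tauij tau j (Suc m)) = (\<Sum>j=1..<m. -(tau m * tauij tau j m * tau m))"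
  proof (rule sum.cong[OF refl])
    fix j assume j: "j \<in> {1..<m}"
    have "tauij tau j (Suc m) = -(tau_up tau j m * tau m * tau_up tau j m)"
      using j by (simp add: tauij_def)
    also have "\<dots> = -(tau m * tau_up tau j m * tau m)"
      using braid_U[OF assms(1), of j m] j assms by simp
    finally show "tauij tau j (Suc m) = -(tau m * tauij tau j m * tau m)"
      using j by (simp add: tauij_def)
  qed
  also have "\<dots> = -(tau m * piA tau m * tau m)"
    unfolding piA_def by (simp add: sum_distrib_left sum_distrib_right sum_negf)
  finally show ?thesis by simp
qed

lemma R: assumes "A_rels n tau" "1 \<le> l" "l \<le> n-1" "m+1 \<le> l"
  shows "tau l * piA tau m = -(piA tau m * tau l)"
  using assms(4)
proof (induction m)
  case 0 then show ?case by (simp add: pi0)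
next
  case (Suc m)
  show ?case
  proof (cases "m = 0")
    case True then show ?thesis by (simp add: pi0)
  next
    case False
    have r: "piA tau (Suc m) = tau m - tau m * piA tau m * tau m"
      by (rule pi_rec[OF assms(1)]) (use False Suc.prems assms in auto)
    have a1: "tau l * tau m = -(tau m * tau l)"
      by (rule anti[OF assms(1)]) (use False Suc.prems assms in auto)
    show ?thesis unfolding r by (rule anti_rec[OF a1 Suc.IH]) (use Suc.prems in auto)
  qed
qed

lemma Q: assumes "A_rels n tau" "1 \<le> k" "k+2 \<le> m" "m \<le> n"
  shows "tau k * piA tau m = -(piA tau m * tau k)"
  using assms(3,4)
proof (induction m)
  case 0 then show ?case by simp
next
  case (Suc m)
  have r: "piA tau (Suc m) = tau m - tau m * piA tau m * tau m"
    by (rule pi_rec[OF assms(1)]) (use Suc.prems assms in auto)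
  show ?case
  proof (cases "k+2 \<le> m")
    case True
    have a1: "tau k * tau m = -(tau m * tau k)"
      by (rule anti[OF assms(1)]) (use True Suc.prems assms in auto)
    show ?thesis unfolding r by (rule anti_rec[OF a1 Suc.IH]) (use True Suc.prems in auto)
  next
    case False
    then have mk: "m = Suc k" using Suc.prems by auto
    have r2: "piA tau m = tau k - tau k * piA tau k * tau k"
      unfolding mk by (rule pi_rec[OF assms(1)]) (use Suc.prems assms mk in auto)
    have ss: "tau k * tau k = 1" using sq[OF assms(1)] Suc.prems assms mk by auto
    have tt: "tau m * tau m = 1" using sq[OF assms(1)] Suc.prems assms mk by auto
    have b: "tau k * tau m * tau k = tau m * tau k * tau m"
      using braid[OF assms(1), of k] Suc.prems assms mk by simp
    have tp: "tau m * piA tau k = -(piA tau k * tau m)"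
      by (rule R[OF assms(1)]) (use Suc.prems assms mk in auto)
    show ?thesis unfolding r r2 by (rule Q_gen[OF ss tt b tp])
  qed
qed

lemma S: assumes "A_rels n tau" "m \<le> i" "i+1 \<le> n"
  shows "piA tau (i+1) * piA tau m = -(piA tau m * piA tau (i+1))"
  using assms(2)
proof (induction m)
  case 0 then show ?case by (simp add: pi0)
next
  case (Suc m)
  show ?case
  proof (cases "m = 0")
    case True then show ?thesis by (simp add: pi0)
  next
    case False
    have r: "piA tau (Suc m) = tau m - tau m * piA tau m * tau m"
      by (rule pi_rec[OF assms(1)]) (use False Suc.prems assms in auto)
    have a1: "piA tau (i+1) * tau m = -(tau m * piA tau (i+1))"
      using Q[OF assms(1), of m "i+1"] False Suc.prems assms by auto
    show ?thesis unfolding r by (rule anti_rec[OF a1 Suc.IH]) (use Suc.prems in auto)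
  qed
qed

theorem mainTheorem18:
  fixes n :: nat and tau :: "nat \<Rightarrow> 'a::complex_algebra_1" and i :: nat
  assumes rels: "A_rels n tau"
    and i: "1 \<le> i" "i \<le> n - 1"
  defines "F \<equiv> tau i * (piA tau i ^ 2 - piA tau (i+1) ^ 2) + (piA tau (i+1) - piA tau i)"
  shows "tau i * piA tau i + piA tau (i+1) * tau i = 1 \<and>
         (piA tau i - piA tau (i+1)) * tau i = tau i * (piA tau i - piA tau (i+1)) \<and>
         (piA tau i ^ 2 - piA tau (i+1) ^ 2) * tau i + tau i * (piA tau i ^ 2 - piA tau (i+1) ^ 2)
           = 2 * (piA tau i - piA tau (i+1)) \<and>
         F * piA tau i + piA tau (i+1) * F = 0 \<and>
         F * piA tau (i+1) + piA tau i * F = 0 \<and>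
         F ^ 2 = piA tau i ^ 2 + piA tau (i+1) ^ 2 - (piA tau i ^ 2 - piA tau (i+1) ^ 2) ^ 2"
proof -
  have tt: "tau i * tau i = 1" using sq[OF rels i] .
  have b: "piA tau (i+1) = tau i - tau i * piA tau i * tau i"
    using pi_rec[OF rels i] by simp
  have ab0: "piA tau (i+1) * piA tau i = -(piA tau i * piA tau (i+1))"
    by (rule S[OF rels]) (use i in auto)
  have ab: "piA tau i * piA tau (i+1) = -(piA tau (i+1) * piA tau i)"
    using ab0 by simp
  show ?thesis unfolding F_def by (rule alg[OF tt b ab])
qed

end
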